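(* Let $k$ be an infinite Brauer field, let $d\ge 1$, assume that $\Sigma^*((d))$ holds, and fix $e\in\{0,\ldots,d\}\setminus\{1\}$. There is a constant $C(d)$ such that the following holds. Let $a_1,\ldots,a_n\in k$ be arbitrary and $b_1,\ldots,b_n\in k$ nonzero, and for $x,y\in k^n$ put $f(x,y)=a_1x_1^ey_1^{d-e}+\cdots+a_nx_n^ey_n^{d-e}$ and $g(x,y)=b_1x_1y_1^{d-1}+\cdots+b_nx_ny_n^{d-1}$. If $n>C(d)$, then there exist $x,y\in k^n$ with $f(x,y)=0$ and $g(x,y)\ne 0$.
   Context: A field $k$ is a Brauer field if for every $d\ge 1$ there is $N_k(d)$ such that every equation $a_1x_1^d+\cdots+a_nx_n^d=0$ with $n>N_k(d)$, $a_i\in k$, has a non-trivial solution in $k^n$. Multi-degrees are tuples $(e_1\ge\cdots\ge e_s\ge 1)$ of integers compared lexicographically. Strength: for a homogeneous $f$ of degree $d>0$, $\operatorname{str}(f)$ is the minimal $s$ with $f=\sum_{t=1}^s g_th_t$, $g_t,h_t$ homogeneous over $k$ of degrees $<d$; the strength of a tuple is the minimal strength of a nontrivial $k$-linear combination of its members of equal degree. $\Sigma(\underline{e})$ is the statement: there is a constant $C$ such that for every finite-dimensional $k$-vector space $U$ and every tuple $\underline{h}$ of homogeneous polynomials on $U$ of multi-degree $\underline{e}$ with $\operatorname{str}(\underline{h})>C$, the $k$-points of the common zero locus $Z(\underline{h})$ are Zariski dense. $\Sigma^*((d))$ is the statement that $\Sigma(\underline{e})$ holds for every multi-degree $\underline{e}$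 with first entry $<d$. *)

theory Defs
  imports Main "HOL-Library.Poly_Mapping"
begin

text \<open>Polynomials in the variables x_0, x_1, ... with coefficients in 'a:
  a finitely supported map from monomials (exponent vectors) to coefficients.\<close>
type_synonym 'a mpoly = "(nat \<Rightarrow>\<^sub>0 nat) \<Rightarrow>\<^sub>0 'a"

definition mdeg :: "(nat \<Rightarrow>\<^sub>0 nat) \<Rightarrow> nat" where
  "mdeg m = (\<Sum>i\<in>Poly_Mapping.keys m. Poly_Mapping.lookup m i)"

definition in_vars :: "nat \<Rightarrow> 'a::zero mpoly \<Rightarrow> bool" where
  "in_vars n p \<longleftrightarrow> (\<forall>m\<in>Poly_Mapping.keys p. \<forall>i\<in>Poly_Mapping.keys m. i < n)"

definition homog :: "nat \<Rightarrow> 'a::zero mpoly \<Rightarrow> bool" where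
  "homog d p \<longleftrightarrow> (\<forall>m\<in>Poly_Mapping.keys p. mdeg m = d)"

definition peval :: "'a::comm_ring_1 mpoly \<Rightarrow> (nat \<Rightarrow> 'a) \<Rightarrow> 'a" where
  "peval p x = (\<Sum>m\<in>Poly_Mapping.keys p. Poly_Mapping.lookup p m * (\<Prod>i\<in>Poly_Mapping.keys m. x i ^ Poly_Mapping.lookup m i))"

definition const_poly :: "'a::zero \<Rightarrow> 'a mpoly" where
  "const_poly c = Poly_Mapping.single 0 c"

definition str_le :: "nat \<Rightarrow> nat \<Rightarrow> 'a::comm_ring_1 mpoly \<Rightarrow> nat \<Rightarrow> bool" where
  "str_le n d f s \<longleftrightarrow>
    (\<exists>g h :: nat \<Rightarrow> 'a mpoly. \<exists>dg dh :: nat \<Rightarrow> nat.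
       (\<forall>t<s. in_vars n (g t) \<and> in_vars n (h t) \<and> homog (dg t) (g t) \<and> homog (dh t) (h t)
              \<and> dg t < d \<and> dh t < d \<and> dg t + dh t = d)
       \<and> f = (\<Sum>t<s. g t * h t))"

definition multideg :: "nat list \<Rightarrow> bool" where
  "multideg e \<longleftrightarrow> e \<noteq> [] \<and> sorted_wrt (\<ge>) e \<and> (\<forall>x\<in>set e. x \<ge> 1)"

definition tuple_str_gt :: "nat \<Rightarrow> nat list \<Rightarrow> (nat \<Rightarrow> 'a::comm_ring_1 mpoly) \<Rightarrow> nat \<Rightarrow> bool" where
  "tuple_str_gt n e hs C \<longleftrightarrow>
    (\<forall>D. \<forall>c :: nat \<Rightarrow> 'a.
       (\<exists>i<length e. e ! i = D \<and> c i \<noteq> 0) \<longrightarrow>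
       \<not> str_le n D (\<Sum>i\<in>{i. i < length e \<and> e ! i = D}. const_poly (c i) * hs i) C)"

text \<open>The k-points of Z(hs) are Zariski dense in Z(hs): every polynomial over k
  vanishing on all k-points of Z(hs) lies in the radical of the ideal (hs)
  (equivalently, by the Nullstellensatz, vanishes on Z(hs) over the algebraic closure).\<close>
definition kpoints_dense :: "nat \<Rightarrow> nat \<Rightarrow> (nat \<Rightarrow> 'a::comm_ring_1 mpoly) \<Rightarrow> bool" where
  "kpoints_dense n s hs \<longleftrightarrow>
    (\<forall>p. in_vars n p \<longrightarrow>
       (\<forall>x :: nat \<Rightarrow> 'a. (\<forall>i<s. peval (hs i) x = 0) \<longrightarrow> peval p x = 0) \<longrightarrow>
       (\<exists>r::nat. \<exists>q :: nat \<Rightarrow> 'a mpoly. p ^ r = (\<Sum>i<s. q i * hs i)))"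

definition Sigma :: "'a::field itself \<Rightarrow> nat list \<Rightarrow> bool" where
  "Sigma TYPE('a) e \<longleftrightarrow>
    (\<exists>C::nat. \<forall>n. \<forall>hs :: nat \<Rightarrow> 'a mpoly.
       (\<forall>i<length e. in_vars n (hs i) \<and> homog (e ! i) (hs i)) \<longrightarrow>
       tuple_str_gt n e hs C \<longrightarrow> kpoints_dense n (length e) hs)"

definition Sigma_star :: "'a::field itself \<Rightarrow> nat \<Rightarrow> bool" where
  "Sigma_star TYPE('a) d \<longleftrightarrow> (\<forall>e. multideg e \<longrightarrow> hd e < d \<longrightarrow> Sigma TYPE('a) e)"

definition brauer_field :: "'a::field itself \<Rightarrow> bool" where
  "brauer_field TYPE('a) \<longleftrightarrow>
    (\<forall>d::nat. d \<ge> 1 \<longrightarrow> (\<exists>N::nat. \<forall>n>N. \<forall>a :: nat \<Rightarrow> 'a.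
       \<exists>x :: nat \<Rightarrow> 'a. (\<exists>i<n. x i \<noteq> 0) \<and> (\<Sum>i<n. a i * x i ^ d) = 0))"

end

theory Submission
  imports Defs "HOL-Computational_Algebra.Polynomial"
begin

lemma exists_nonroot:
  assumes inf: "infinite (UNIV :: 'a::field set)" and m: "m \<ge> 1"
  shows "\<exists>v::'a. v \<noteq> 0 \<and> v ^ m \<noteq> 1"
proof -
  let ?p = "monom (1::'a) m - 1"
  have "poly ?p 0 = -1" using m by (simp add: poly_monom)
  hence p0: "?p \<noteq> 0" by auto
  have "finite {x. poly ?p x = 0}" using poly_roots_finite[OF p0] .
  hence "finite (insert 0 {x. poly ?p x = 0})" by simp
  then obtain v where "v \<notin> insert 0 {x. poly ?p x = 0}"
    using inf by (metis ex_new_if_finite)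
  thus ?thesis by (auto simp: poly_monom)
qed

theorem lemma6p2:
  fixes d e :: nat
  assumes "infinite (UNIV :: 'a::field set)"
    and "brauer_field TYPE('a)"
    and "d \<ge> 1"
    and "Sigma_star TYPE('a) d"
    and "e \<le> d" and "e \<noteq> 1"
  shows "\<exists>C::nat. \<forall>n. \<forall>a b :: nat \<Rightarrow> 'a. n > C \<longrightarrow> (\<forall>i<n. b i \<noteq> 0) \<longrightarrow>
           (\<exists>x y :: nat \<Rightarrow> 'a. (\<Sum>i<n. a i * x i ^ e * y i ^ (d - e)) = 0 \<and>
                              (\<Sum>i<n. b i * x i * y i ^ (d - 1)) \<noteq> 0)"
proof (cases "e = 0")
  case True
  from assms(2,3) obtain N where N: "\<forall>n>N. \<forall>a :: nat \<Rightarrow> 'a.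
       \<exists>x :: nat \<Rightarrow> 'a. (\<exists>i<n. x i \<noteq> 0) \<and> (\<Sum>i<n. a i * x i ^ d) = 0"
    unfolding brauer_field_def by blast
  show ?thesis
  proof (rule exI[of _ N], intro allI impI)
    fix n and a b :: "nat \<Rightarrow> 'a"
    assume n: "N < n" and b: "\<forall>i<n. b i \<noteq> 0"
    from N n obtain y j where j: "j < n" "y j \<noteq> 0" and f: "(\<Sum>i<n. a i * y i ^ d) = 0"
      by blast
    define x1 where "x1 = (\<lambda>i. if i = j then (1::'a) else 0)"
    have "(\<Sum>i<n. b i * x1 i * y i ^ (d - 1)) = (\<Sum>i<n. if i = j then b j * y j ^ (d - 1) else 0)"
      by (rule sum.cong) (auto simp: x1_def)
    also have "\<dots> = b j * y j ^ (d - 1)" using j by simp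
    finally have "(\<Sum>i<n. b i * x1 i * y i ^ (d - 1)) \<noteq> 0" using b j by simp
    moreover have "(\<Sum>i<n. a i * x1 i ^ e * y i ^ (d - e)) = 0" using f True by (simp add: x1_def)
    ultimately show "\<exists>x y :: nat \<Rightarrow> 'a. (\<Sum>i<n. a i * x i ^ e * y i ^ (d - e)) = 0 \<and>
                              (\<Sum>i<n. b i * x i * y i ^ (d - 1)) \<noteq> 0" by blast
  qed
next
  case False
  hence e1: "e \<ge> 1" by simp
  have e2: "e \<ge> 2" using False assms(6) by simp
  from assms(2) e1 obtain N where N: "\<forall>n>N. \<forall>a :: nat \<Rightarrow> 'a.
       \<exists>x :: nat \<Rightarrow> 'a. (\<exists>i<n. x i \<noteq> 0) \<and> (\<Sum>i<n. a i * x i ^ e) = 0"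
    unfolding brauer_field_def by blast
  have "d * (e - 1) \<ge> 1" using e2 assms(3) by simp
  then obtain v :: 'a where v: "v \<noteq> 0" "v ^ (d * (e - 1)) \<noteq> 1"
    using exists_nonroot[OF assms(1)] by blast
  show ?thesis
  proof (rule exI[of _ N], intro allI impI)
    fix n and a b :: "nat \<Rightarrow> 'a"
    assume n: "N < n" and b: "\<forall>i<n. b i \<noteq> 0"
    from N n obtain x0 j where j: "j < n" "x0 j \<noteq> 0" and f: "(\<Sum>i<n. a i * x0 i ^ e) = 0"
      by blast
    show "\<exists>x y :: nat \<Rightarrow> 'a. (\<Sum>i<n. a i * x i ^ e * y i ^ (d - e)) = 0 \<and>
                              (\<Sum>i<n. b i * x i * y i ^ (d - 1)) \<noteq> 0"
    proof (cases "(\<Sum>i<n. b i * x0 i) = 0")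
      case False
      thus ?thesis using f by (intro exI[of _ x0] exI[of _ "\<lambda>_. 1"]) simp
    next
      case G: True
      let ?x = "\<lambda>i. if i = j then x0 i else v ^ (d - e) * x0 i"
      let ?y = "\<lambda>i. if i = j then v ^ e else 1"
      have "(\<Sum>i<n. a i * ?x i ^ e * ?y i ^ (d - e)) = (\<Sum>i<n. v ^ (e * (d - e)) * (a i * x0 i ^ e))"
        by (rule sum.cong) (auto simp: power_mult_distrib power_mult[symmetric] mult.commute mult.left_commute)
      also have "\<dots> = 0" using f by (simp add: sum_distrib_left[symmetric])
      finally have F: "(\<Sum>i<n. a i * ?x i ^ e * ?y i ^ (d - e)) = 0" .
      have ex: "e * (d - 1) = (d - e) + d * (e - 1)" using e1 assms(5)
        by (simp add: algebra_simps diff_mult_distrib diff_mult_distrib2)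
      have pw: "v ^ (e * (d - 1)) = v ^ (d - e) * v ^ (d * (e - 1))"
        by (simp only: ex power_add)
      have "(\<Sum>i<n. b i * ?x i * ?y i ^ (d - 1)) =
            (\<Sum>i<n. v ^ (d - e) * (b i * x0 i) + (if i = j then b j * x0 j * (v ^ (e * (d - 1)) - v ^ (d - e)) else 0))"
        by (rule sum.cong) (auto simp: power_mult[symmetric] algebra_simps)
      also have "\<dots> = v ^ (d - e) * (\<Sum>i<n. b i * x0 i) + b j * x0 j * (v ^ (e * (d - 1)) - v ^ (d - e))"
        using j by (simp add: sum.distrib sum_distrib_left)
      also have "\<dots> = b j * x0 j * v ^ (d - e) * (v ^ (d * (e - 1)) - 1)"
        using G unfolding pw by (simp add: algebra_simps)
      finally have "(\<Sum>i<n. b i * ?x i * ?y i ^ (d - 1)) \<noteq> 0"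
        using b j v by simp
      with F show ?thesis by (intro exI[of _ ?x] exI[of _ ?y] conjI)
    qed
  qed
qed

end
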